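(* Let $n\ge 1$, $m\ge 1$ be integers and $\mathcal D$ a complex Hilbert space. For every $f\in H_m(\mathbb B,\mathcal D)$, \[ (M_z^*M_z)^{-1}(M_z^*f)=M_z^*\delta f . \] In particular, the row operator $\delta M_z: H_m(\mathbb B,\mathcal D)^n\to H_m(\mathbb B,\mathcal D)$, $(f_i)_{i=1}^n\mapsto \delta\big(\sum_{i=1}^n z_if_i\big)$, is a continuous linear extension of the operator $M_z(M_z^*M_z)^{-1}:\operatorname{Im}M_z^*\to H_m(\mathbb B,\mathcal D)$.
   Context: $\mathbb B=\{z\in\mathbb C^n:\|z\|<1\}$. For $\alpha\in\mathbb N^n$ write $|\alpha|=\alpha_1+\dots+\alpha_n$, $\alpha!=\alpha_1!\cdots\alpha_n!$, and for an integer $\ell\ge1$ set $\rho_\ell(\alpha)=\frac{(\ell+|\alpha|-1)!}{\alpha!(\ell-1)!}$. For a complex Hilbert space $\mathcal E$, $H_\ell(\mathbb B,\mathcal E)$ denotes the Hilbert space of analytic functions $f=\sum_\alpha f_\alpha z^\alpha:\mathbb B\to\mathcal E$ with $\|f\|^2=\sum_\alpha\|f_\alpha\|^2/\rho_\ell(\alpha)<\infty$ (equivalently, the $\mathcal E$-valued reproducing kernel Hilbert space with kernel $K_\ell(z,w)=(1-\langle z,w\rangle)^{-\ell}1_{\mathcal E}$). $M_z=(M_{z_1},\dots,M_{z_n})$ is the tuple of multiplication operators by the coordinate functions; it is also regarded as the row operator $M_z:H_m(\mathbb B,\mathcal D)^n\to H_m(\mathbb B,\mathcal D)$, $(f_i)\mapsto\sum_i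 z_if_i$, with adjoint the column operator $M_z^*f=(M_{z_i}^*f)_{i=1}^n$. The row operator $M_z$ has closed range $\{f: f(0)=0\}$, so $M_z^*M_z=(M_{z_i}^*M_{z_j})_{i,j}$ restricts to an invertible operator on the closed subspace $\operatorname{Im}M_z^*\subset H_m(\mathbb B,\mathcal D)^n$; $(M_z^*M_z)^{-1}$ denotes the inverse of this restriction. The operator $\delta:H_m(\mathbb B,\mathcal D)\to H_m(\mathbb B,\mathcal D)$ is defined by \[ \delta\Big(\sum_{k=0}^\infty\sum_{|\alpha|=k}f_\alpha z^\alpha\Big)=f_0+\sum_{k=1}^\infty\frac{m+k-1}{k}\sum_{|\alpha|=k}f_\alpha z^\alpha . \] *)

theory Defs
  imports "HOL-Analysis.Analysis"
begin

text \<open>Multi-indices alpha in N^n are functions 'n => nat for a finite type 'n, n = CARD('n).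
  An element f = sum_alpha f_alpha z^alpha of H_l(B,D) is represented by its coefficient
  family alpha |-> f_alpha in D.\<close>

definition mabs :: "('n::finite \<Rightarrow> nat) \<Rightarrow> nat" where
  "mabs \<alpha> = (\<Sum>i\<in>UNIV. \<alpha> i)"

definition mfact :: "('n::finite \<Rightarrow> nat) \<Rightarrow> real" where
  "mfact \<alpha> = (\<Prod>i\<in>UNIV. fact (\<alpha> i))"

definition rho :: "nat \<Rightarrow> ('n::finite \<Rightarrow> nat) \<Rightarrow> real" where
  "rho l \<alpha> = fact (l + mabs \<alpha> - 1) / (mfact \<alpha> * fact (l - 1))"

text \<open>A complex Hilbert space D is a real Hilbert space with an orthogonal complex structure J
  (multiplication by i).  Complex scalar multiplication and complex inner product:\<close>

definition complex_structure :: "('d::real_inner \<Rightarrow> 'd) \<Rightarrow> bool" where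
  "complex_structure J \<longleftrightarrow> linear J \<and> (\<forall>x. J (J x) = - x) \<and> (\<forall>x y. J x \<bullet> J y = x \<bullet> y)"

definition cscale :: "('d::real_inner \<Rightarrow> 'd) \<Rightarrow> complex \<Rightarrow> 'd \<Rightarrow> 'd" where
  "cscale J c x = Re c *\<^sub>R x + Im c *\<^sub>R J x"

definition cinner :: "('d::real_inner \<Rightarrow> 'd) \<Rightarrow> 'd \<Rightarrow> 'd \<Rightarrow> complex" where
  "cinner J x y = Complex (x \<bullet> y) (x \<bullet> J y)"

definition Hspace :: "nat \<Rightarrow> (('n::finite \<Rightarrow> nat) \<Rightarrow> 'd::real_inner) set" where
  "Hspace l = {f. (\<lambda>\<alpha>. (norm (f \<alpha>))\<^sup>2 / rho l \<alpha>) summable_on UNIV}"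

definition hinner :: "nat \<Rightarrow> ('d::real_inner \<Rightarrow> 'd) \<Rightarrow> (('n::finite \<Rightarrow> nat) \<Rightarrow> 'd)
    \<Rightarrow> (('n \<Rightarrow> nat) \<Rightarrow> 'd) \<Rightarrow> complex" where
  "hinner l J f g = infsum (\<lambda>\<alpha>. cinner J (f \<alpha>) (g \<alpha>) / complex_of_real (rho l \<alpha>)) UNIV"

definition hnorm :: "nat \<Rightarrow> (('n::finite \<Rightarrow> nat) \<Rightarrow> 'd::real_inner) \<Rightarrow> real" where
  "hnorm l f = sqrt (infsum (\<lambda>\<alpha>. (norm (f \<alpha>))\<^sup>2 / rho l \<alpha>) UNIV)"

definition HspaceN :: "nat \<Rightarrow> ('n::finite \<Rightarrow> ('n \<Rightarrow> nat) \<Rightarrow> 'd::real_inner) set" where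
  "HspaceN l = {F. \<forall>i. F i \<in> Hspace l}"

definition hinnerN :: "nat \<Rightarrow> ('d::real_inner \<Rightarrow> 'd) \<Rightarrow> ('n::finite \<Rightarrow> ('n \<Rightarrow> nat) \<Rightarrow> 'd)
    \<Rightarrow> ('n \<Rightarrow> ('n \<Rightarrow> nat) \<Rightarrow> 'd) \<Rightarrow> complex" where
  "hinnerN l J F G = (\<Sum>i\<in>UNIV. hinner l J (F i) (G i))"

definition hnormN :: "nat \<Rightarrow> ('n::finite \<Rightarrow> ('n \<Rightarrow> nat) \<Rightarrow> 'd::real_inner) \<Rightarrow> real" where
  "hnormN l F = sqrt (\<Sum>i\<in>UNIV. (hnorm l (F i))\<^sup>2)"

definition Mzi :: "'n::finite \<Rightarrow> (('n \<Rightarrow> nat) \<Rightarrow> 'd::real_vector) \<Rightarrow> (('n \<Rightarrow> nat) \<Rightarrow> 'd)" where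
  "Mzi i f = (\<lambda>\<alpha>. if \<alpha> i = 0 then 0 else f (\<alpha>(i := \<alpha> i - 1)))"

definition Mz_row :: "('n::finite \<Rightarrow> ('n \<Rightarrow> nat) \<Rightarrow> 'd::real_vector) \<Rightarrow> (('n \<Rightarrow> nat) \<Rightarrow> 'd)" where
  "Mz_row F = (\<lambda>\<alpha>. \<Sum>i\<in>UNIV. Mzi i (F i) \<alpha>)"

definition Mz_star :: "nat \<Rightarrow> ('d::real_inner \<Rightarrow> 'd) \<Rightarrow> (('n::finite \<Rightarrow> nat) \<Rightarrow> 'd)
    \<Rightarrow> ('n \<Rightarrow> ('n \<Rightarrow> nat) \<Rightarrow> 'd)" where
  "Mz_star m J f = (THE G. G \<in> HspaceN m \<and>
      (\<forall>H\<in>HspaceN m. hinner m J (Mz_row H) f = hinnerN m J H G))"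

definition MzMz_inv :: "nat \<Rightarrow> ('d::real_inner \<Rightarrow> 'd) \<Rightarrow> ('n::finite \<Rightarrow> ('n \<Rightarrow> nat) \<Rightarrow> 'd)
    \<Rightarrow> ('n \<Rightarrow> ('n \<Rightarrow> nat) \<Rightarrow> 'd)" where
  "MzMz_inv m J G = (THE X. X \<in> Mz_star m J ` Hspace m \<and> Mz_star m J (Mz_row X) = G)"

definition delta :: "nat \<Rightarrow> (('n::finite \<Rightarrow> nat) \<Rightarrow> 'd::real_vector) \<Rightarrow> (('n \<Rightarrow> nat) \<Rightarrow> 'd)" where
  "delta m f = (\<lambda>\<alpha>. if mabs \<alpha> = 0 then f \<alpha>
      else (real (m + mabs \<alpha> - 1) / real (mabs \<alpha>)) *\<^sub>R f \<alpha>)"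

end

theory Submission
  imports Defs
begin

definition sucx :: "'n \<Rightarrow> ('n \<Rightarrow> nat) \<Rightarrow> ('n \<Rightarrow> nat)" where
  "sucx i \<beta> = \<beta>(i := Suc (\<beta> i))"

lemma mabs_sucx: "mabs (sucx i (\<beta>::'n::finite\<Rightarrow>nat)) = Suc (mabs \<beta>)"
proof -
  have "mabs (sucx i \<beta>) = (\<Sum>j\<in>UNIV. \<beta> j + (if j = i then 1 else 0))"
    unfolding mabs_def sucx_def by (intro sum.cong) auto
  also have "\<dots> = mabs \<beta> + 1" by (simp add: sum.distrib mabs_def)
  finally show ?thesis by simp
qed

lemma mfact_sucx: "mfact (sucx i (\<beta>::'n::finite\<Rightarrow>nat)) = mfact \<beta> * real (Suc (\<beta> i))"
proof -
  have "mfact (sucx i \<beta>) = (\<Prod>j\<in>UNIV. fact (\<beta> j) * (if j = i then real (Suc (\<beta> i)) else 1))"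
    unfolding mfact_def sucx_def by (intro prod.cong) (auto simp: algebra_simps)
  also have "\<dots> = mfact \<beta> * real (Suc (\<beta> i))" by (simp add: prod.distrib mfact_def)
  finally show ?thesis .
qed

lemma mfact_pos: "mfact \<alpha> > 0" unfolding mfact_def by (simp add: prod_pos)

lemma rho_pos: "rho l \<alpha> > 0" unfolding rho_def using mfact_pos[of \<alpha>] by simp

lemma sq_div_rho_nonneg[simp]: "0 \<le> (norm x)\<^sup>2 / rho l \<alpha>"
  by (intro divide_nonneg_nonneg) (auto simp: rho_pos less_imp_le)

lemma rho_sucx: assumes "m \<ge> 1"
  shows "rho m (sucx i \<beta>) = rho m \<beta> * real (m + mabs \<beta>) / real (Suc (\<beta> i))"
proof -
  have "fact (m + mabs (sucx i \<beta>) - 1) = (fact (m + mabs \<beta>) :: real)"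
    by (simp add: mabs_sucx)
  also have "\<dots> = real (m + mabs \<beta>) * fact (m + mabs \<beta> - 1)"
    using assms by (metis add_gr_0 fact_num_eq_if less_le_trans not_less_eq_eq zero_less_one
       Suc_diff_1 fact_Suc of_nat_Suc diff_Suc_1 le_add1 linorder_not_le one_le_numeral)
  finally show ?thesis unfolding rho_def mfact_sucx by (simp add: mult_ac)
qed

lemma coef_le1: assumes "m \<ge> 1" shows "real (Suc (\<beta> i)) \<le> real (m + mabs \<beta>)"
proof -
  have "\<beta> i \<le> mabs \<beta>" unfolding mabs_def by (rule member_le_sum) auto
  thus ?thesis using assms by simp
qed

lemma sucx_inj: "inj (sucx (i::'n))"
proof (rule injI)
  fix x y :: "'n \<Rightarrow> nat" assume "sucx i x = sucx i y"
  hence "\<And>j. (sucx i x) j = (sucx i y) j" by simp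
  hence "\<And>j. x j = y j" unfolding sucx_def by (metis Suc_inject fun_upd_apply)
  thus "x = y" by blast
qed

lemma sucx_range: "range (sucx (i::'n)) = {\<alpha>::'n\<Rightarrow>nat. \<alpha> i \<noteq> 0}"
proof (intro set_eqI iffI)
  fix \<alpha> :: "'n \<Rightarrow> nat" assume "\<alpha> \<in> {\<alpha>. \<alpha> i \<noteq> 0}"
  hence "\<alpha> = sucx i (\<alpha>(i := \<alpha> i - 1))" unfolding sucx_def by auto
  thus "\<alpha> \<in> range (sucx i)" by blast
qed (auto simp: sucx_def)

lemma sucx_pred: "\<alpha> i \<noteq> 0 \<Longrightarrow> sucx i (\<alpha>(i := \<alpha> i - 1)) = \<alpha>"
  unfolding sucx_def by auto

lemma reindex_summable:
  fixes g :: "('n \<Rightarrow> nat) \<Rightarrow> 'a::{comm_monoid_add,t2_space}"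
  assumes "\<And>\<alpha>. \<alpha> i = 0 \<Longrightarrow> g \<alpha> = 0"
  shows "g summable_on UNIV \<longleftrightarrow> (\<lambda>\<beta>. g (sucx i \<beta>)) summable_on UNIV"
proof -
  have "g summable_on UNIV \<longleftrightarrow> g summable_on range (sucx i)"
    by (rule summable_on_cong_neutral) (auto simp: sucx_range assms)
  also have "\<dots> \<longleftrightarrow> (g \<circ> sucx i) summable_on UNIV"
    using summable_on_reindex[of "sucx i" UNIV g] sucx_inj[of i] by simp
  finally show ?thesis by (simp add: o_def)
qed

lemma reindex_infsum:
  fixes g :: "('n \<Rightarrow> nat) \<Rightarrow> 'a::{comm_monoid_add,t2_space}"
  assumes "\<And>\<alpha>. \<alpha> i = 0 \<Longrightarrow> g \<alpha> = 0"
  shows "infsum g UNIV = infsum (\<lambda>\<beta>. g (sucx i \<beta>)) UNIV"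
proof -
  have "infsum g UNIV = infsum g (range (sucx i))"
    by (rule infsum_cong_neutral) (auto simp: sucx_range assms)
  also have "\<dots> = infsum (g \<circ> sucx i) UNIV"
    using infsum_reindex[of "sucx i" UNIV g] sucx_inj[of i] by simp
  finally show ?thesis by (simp add: o_def)
qed

lemma Mzi_sucx: "Mzi i h (sucx i \<beta>) = h \<beta>"
  unfolding Mzi_def sucx_def by simp

lemma Mzi_zero: "\<alpha> i = 0 \<Longrightarrow> Mzi i h \<alpha> = 0"
  unfolding Mzi_def by simp

definition NN :: "nat \<Rightarrow> (('n::finite \<Rightarrow> nat) \<Rightarrow> 'd::real_inner) \<Rightarrow> real" where
  "NN l f = infsum (\<lambda>\<alpha>. (norm (f \<alpha>))\<^sup>2 / rho l \<alpha>) UNIV"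

lemma NN_nonneg: "NN l f \<ge> 0"
  unfolding NN_def by (rule infsum_nonneg) (simp add: rho_pos less_imp_le)

lemma hnorm_NN: "hnorm l f = sqrt (NN l f)" unfolding hnorm_def NN_def ..

lemma rho_le_sucx: assumes "m \<ge> 1" shows "rho m \<beta> \<le> rho m (sucx i \<beta>)"
proof -
  have "rho m (sucx i \<beta>) = rho m \<beta> * (real (m + mabs \<beta>) / real (Suc (\<beta> i)))"
    using rho_sucx[OF assms] by simp
  moreover have "real (m + mabs \<beta>) / real (Suc (\<beta> i)) \<ge> 1"
    using coef_le1[OF assms, of \<beta> i] by simp
  ultimately show ?thesis using rho_pos[of m \<beta>]
    by (metis mult_le_cancel_left1 less_imp_le not_le)
qed

lemma Mzi_H:
  assumes m: "m \<ge> 1" and h: "h \<in> Hspace m"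
  shows "Mzi i h \<in> Hspace m" "NN m (Mzi i h) \<le> NN m h"
proof -
  let ?g = "\<lambda>\<alpha>. (norm (Mzi i h \<alpha>))\<^sup>2 / rho m \<alpha>"
  have z: "\<And>\<alpha>. \<alpha> i = 0 \<Longrightarrow> ?g \<alpha> = 0" by (simp add: Mzi_zero)
  have hs: "(\<lambda>\<alpha>. (norm (h \<alpha>))\<^sup>2 / rho m \<alpha>) summable_on UNIV" using h unfolding Hspace_def by simp
  have le: "(norm (h \<beta>))\<^sup>2 / rho m (sucx i \<beta>) \<le> (norm (h \<beta>))\<^sup>2 / rho m \<beta>" for \<beta>
    by (rule divide_left_mono) (use rho_le_sucx[OF m, of \<beta> i] rho_pos[of m \<beta>] in auto)
  have s2: "(\<lambda>\<beta>. ?g (sucx i \<beta>)) summable_on UNIV"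
    unfolding Mzi_sucx
    by (rule summable_on_comparison_test[OF hs]) (use le in simp_all)
  thus "Mzi i h \<in> Hspace m" unfolding Hspace_def using reindex_summable[of i ?g, OF z] by simp
  have "NN m (Mzi i h) = infsum (\<lambda>\<beta>. ?g (sucx i \<beta>)) UNIV"
    unfolding NN_def by (rule reindex_infsum[OF z])
  also have "\<dots> \<le> NN m h" unfolding NN_def
    by (rule infsum_mono[OF s2 hs]) (simp add: Mzi_sucx le)
  finally show "NN m (Mzi i h) \<le> NN m h" .
qed


lemma summable_on_finsum:
  fixes f :: "'i \<Rightarrow> 'a \<Rightarrow> 'b::topological_comm_monoid_add"
  assumes "finite I" "\<And>i. i \<in> I \<Longrightarrow> f i summable_on A"
  shows "(\<lambda>x. \<Sum>i\<in>I. f i x) summable_on A"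
  using assms by (induction I rule: finite_induct) (auto intro!: summable_on_add)

lemma infsum_finsum:
  fixes f :: "'i \<Rightarrow> 'a \<Rightarrow> 'b::{topological_comm_monoid_add,t2_space}"
  assumes "finite I" "\<And>i. i \<in> I \<Longrightarrow> f i summable_on A"
  shows "infsum (\<lambda>x. \<Sum>i\<in>I. f i x) A = (\<Sum>i\<in>I. infsum (f i) A)"
  using assms
proof (induction I rule: finite_induct)
  case (insert j I)
  have "infsum (\<lambda>x. \<Sum>i\<in>insert j I. f i x) A = infsum (\<lambda>x. f j x + (\<Sum>i\<in>I. f i x)) A"
    using insert by simp
  also have "\<dots> = infsum (f j) A + infsum (\<lambda>x. \<Sum>i\<in>I. f i x) A"
    by (rule infsum_add) (use insert in \<open>auto intro!: summable_on_finsum\<close>)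
  finally show ?case using insert by simp
qed simp

lemma Mz_row_H:
  fixes F :: "'n::finite \<Rightarrow> ('n \<Rightarrow> nat) \<Rightarrow> 'd::real_inner"
  assumes m: "m \<ge> 1" and F: "F \<in> HspaceN m"
  shows "Mz_row F \<in> Hspace m" "NN m (Mz_row F) \<le> real CARD('n) * (\<Sum>i\<in>UNIV. NN m (F i))"
proof -
  let ?g = "\<lambda>i \<alpha>. (norm (Mzi i (F i) \<alpha>))\<^sup>2 / rho m \<alpha>"
  have Fi: "F i \<in> Hspace m" for i using F unfolding HspaceN_def by auto
  have gs: "?g i summable_on UNIV" for i using Mzi_H(1)[OF m Fi] unfolding Hspace_def by simp
  have S: "(\<lambda>\<alpha>. real CARD('n) * (\<Sum>i\<in>UNIV. ?g i \<alpha>)) summable_on UNIV"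
    by (intro summable_on_cmult_right summable_on_finsum gs) auto
  have pw: "(norm (Mz_row F \<alpha>))\<^sup>2 / rho m \<alpha> \<le> real CARD('n) * (\<Sum>i\<in>UNIV. ?g i \<alpha>)" for \<alpha>
  proof -
    have "norm (Mz_row F \<alpha>) \<le> (\<Sum>i\<in>UNIV. norm (Mzi i (F i) \<alpha>))"
      unfolding Mz_row_def by (rule norm_sum)
    hence "(norm (Mz_row F \<alpha>))\<^sup>2 \<le> (\<Sum>i\<in>UNIV. norm (Mzi i (F i) \<alpha>))\<^sup>2"
      by (intro power_mono) auto
    also have "\<dots> \<le> (\<Sum>i\<in>UNIV. (norm (Mzi i (F i) \<alpha>))\<^sup>2) * real CARD('n)"
      by (rule sum_squared_le_sum_of_squares)
    finally have "(norm (Mz_row F \<alpha>))\<^sup>2 / rho m \<alpha> \<le> (\<Sum>i\<in>UNIV. (norm (Mzi i (F i) \<alpha>))\<^sup>2) * real CARD('n) / rho m \<alpha>"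
      by (intro divide_right_mono) (auto simp: rho_pos less_imp_le)
    also have "\<dots> = real CARD('n) * (\<Sum>i\<in>UNIV. ?g i \<alpha>)"
      by (simp add: sum_divide_distrib[symmetric])
    finally show ?thesis .
  qed
  have s1: "(\<lambda>\<alpha>. (norm (Mz_row F \<alpha>))\<^sup>2 / rho m \<alpha>) summable_on UNIV"
    by (rule summable_on_comparison_test[OF S]) (use pw in auto)
  thus "Mz_row F \<in> Hspace m" unfolding Hspace_def by simp
  have "NN m (Mz_row F) \<le> infsum (\<lambda>\<alpha>. real CARD('n) * (\<Sum>i\<in>UNIV. ?g i \<alpha>)) UNIV"
    unfolding NN_def by (rule infsum_mono[OF s1 S]) (use pw in auto)
  also have "\<dots> = real CARD('n) * (\<Sum>i\<in>UNIV. NN m (Mzi i (F i)))"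
    unfolding NN_def by (subst infsum_cmult_right) (auto intro!: summable_on_finsum gs simp: infsum_finsum[OF _ gs])
  also have "\<dots> \<le> real CARD('n) * (\<Sum>i\<in>UNIV. NN m (F i))"
    by (intro mult_left_mono sum_mono Mzi_H(2)[OF m Fi]) auto
  finally show "NN m (Mz_row F) \<le> real CARD('n) * (\<Sum>i\<in>UNIV. NN m (F i))" .
qed

lemma delta_factor: assumes m: "m \<ge> 1" and k: "k \<noteq> 0"
  shows "real (m + k - 1) / real k \<le> real m" "real (m + k - 1) / real k > 0"
proof -
  have "m + k - 1 \<le> m * k"
  proof -
    have "(m - 1) * (k - 1) \<ge> 0" by simp
    obtain a b where "m = Suc a" "k = Suc b" using m k by (metis Suc_le_D not0_implies_Suc One_nat_def)
    thus ?thesis by simp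
  qed
  hence "real (m + k - 1) \<le> real m * real k" by (metis of_nat_le_iff of_nat_mult)
  thus "real (m + k - 1) / real k \<le> real m" using k by (simp add: divide_le_eq)
  show "real (m + k - 1) / real k > 0" using m k by simp
qed

lemma delta_norm: assumes m: "m \<ge> 1" shows "norm (delta m f \<alpha>) \<le> real m * norm (f \<alpha>)"
proof (cases "mabs \<alpha> = 0")
  case True thus ?thesis using m unfolding delta_def
    by (simp add: mult_le_cancel_right1)
next
  case False
  have "norm (delta m f \<alpha>) = real (m + mabs \<alpha> - 1) / real (mabs \<alpha>) * norm (f \<alpha>)"
    using False unfolding delta_def by simp
  also have "\<dots> \<le> real m * norm (f \<alpha>)"
    by (rule mult_right_mono[OF delta_factor(1)[OF m False]]) simp
  finally show ?thesis .
qed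

lemma delta_H:
  assumes m: "m \<ge> 1" and f: "f \<in> Hspace m"
  shows "delta m f \<in> Hspace m" "NN m (delta m f) \<le> (real m)\<^sup>2 * NN m f"
proof -
  have fs: "(\<lambda>\<alpha>. (norm (f \<alpha>))\<^sup>2 / rho m \<alpha>) summable_on UNIV" using f unfolding Hspace_def by simp
  have S: "(\<lambda>\<alpha>. (real m)\<^sup>2 * ((norm (f \<alpha>))\<^sup>2 / rho m \<alpha>)) summable_on UNIV"
    by (rule summable_on_cmult_right[OF fs])
  have pw: "(norm (delta m f \<alpha>))\<^sup>2 / rho m \<alpha> \<le> (real m)\<^sup>2 * ((norm (f \<alpha>))\<^sup>2 / rho m \<alpha>)" for \<alpha>
  proof -
    have "(norm (delta m f \<alpha>))\<^sup>2 \<le> (real m * norm (f \<alpha>))\<^sup>2"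
      by (intro power_mono delta_norm[OF m]) auto
    thus ?thesis by (simp add: power_mult_distrib divide_right_mono rho_pos less_imp_le)
  qed
  have s1: "(\<lambda>\<alpha>. (norm (delta m f \<alpha>))\<^sup>2 / rho m \<alpha>) summable_on UNIV"
    by (rule summable_on_comparison_test[OF S]) (use pw in auto)
  thus "delta m f \<in> Hspace m" unfolding Hspace_def by simp
  have "NN m (delta m f) \<le> infsum (\<lambda>\<alpha>. (real m)\<^sup>2 * ((norm (f \<alpha>))\<^sup>2 / rho m \<alpha>)) UNIV"
    unfolding NN_def by (rule infsum_mono[OF s1 S]) (use pw in auto)
  also have "\<dots> = (real m)\<^sup>2 * NN m f" unfolding NN_def by (rule infsum_cmult_right) (use fs in auto)
  finally show "NN m (delta m f) \<le> (real m)\<^sup>2 * NN m f" .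
qed


lemma cs_linear: "complex_structure J \<Longrightarrow> linear J" unfolding complex_structure_def by simp

lemma cs_norm: assumes "complex_structure J" shows "norm (J y) = norm y"
  using assms unfolding complex_structure_def norm_eq_sqrt_inner by simp

lemma cinner_zero_left[simp]: "cinner J 0 y = 0" unfolding cinner_def by (simp add: complex_eq_iff)

lemma cinner_sum_left: "cinner J (\<Sum>i\<in>I. x i) y = (\<Sum>i\<in>I. cinner J (x i) y)"
  unfolding cinner_def by (simp add: complex_eq_iff inner_sum_left Re_sum Im_sum)

lemma cinner_scale_right: assumes "complex_structure J"
  shows "cinner J x (c *\<^sub>R y) = complex_of_real c * cinner J x y"
  using linear_scale[OF cs_linear[OF assms]] unfolding cinner_def by (simp add: complex_eq_iff)

lemma cinner_norm: assumes "complex_structure J"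
  shows "norm (cinner J x y) \<le> ((norm x)\<^sup>2 + (norm y)\<^sup>2)"
proof -
  have "norm (cinner J x y) \<le> \<bar>x \<bullet> y\<bar> + \<bar>x \<bullet> J y\<bar>" using cmod_le[of "cinner J x y"]
    unfolding cinner_def by simp
  also have "\<dots> \<le> norm x * norm y + norm x * norm (J y)"
    by (intro add_mono Cauchy_Schwarz_ineq2)
  also have "\<dots> = 2 * (norm x * norm y)" using cs_norm[OF assms] by simp
  also have "\<dots> \<le> (norm x)\<^sup>2 + (norm y)\<^sup>2" 
  proof -
    have "0 \<le> (norm x - norm y)\<^sup>2" by simp
    thus ?thesis unfolding power2_diff by simp
  qed
  finally show ?thesis .
qed

lemma cinner_summable:
  assumes J: "complex_structure J" and f: "f \<in> Hspace m" and g: "g \<in> Hspace m"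
  shows "(\<lambda>\<alpha>. cinner J (f \<alpha>) (g \<alpha>) / complex_of_real (rho m \<alpha>)) summable_on UNIV"
proof (rule abs_summable_summable)
  have fs: "(\<lambda>\<alpha>. (norm (f \<alpha>))\<^sup>2 / rho m \<alpha>) summable_on UNIV" using f unfolding Hspace_def by simp
  have gs: "(\<lambda>\<alpha>. (norm (g \<alpha>))\<^sup>2 / rho m \<alpha>) summable_on UNIV" using g unfolding Hspace_def by simp
  show "(\<lambda>\<alpha>. norm (cinner J (f \<alpha>) (g \<alpha>) / complex_of_real (rho m \<alpha>))) summable_on UNIV"
  proof (rule Infinite_Sum.abs_summable_on_comparison_test'[OF summable_on_add[OF fs gs]])
    fix \<alpha>
    have "norm (cinner J (f \<alpha>) (g \<alpha>) / complex_of_real (rho m \<alpha>)) = norm (cinner J (f \<alpha>) (g \<alpha>)) / rho m \<alpha>"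
      using rho_pos[of m \<alpha>] by (simp add: norm_divide)
    also have "\<dots> \<le> ((norm (f \<alpha>))\<^sup>2 + (norm (g \<alpha>))\<^sup>2) / rho m \<alpha>"
      by (intro divide_right_mono cinner_norm[OF J]) (simp add: rho_pos less_imp_le)
    finally show "norm (cinner J (f \<alpha>) (g \<alpha>) / complex_of_real (rho m \<alpha>)) \<le> (norm (f \<alpha>))\<^sup>2 / rho m \<alpha> + (norm (g \<alpha>))\<^sup>2 / rho m \<alpha>"
      by (simp add: add_divide_distrib)
  qed
qed


definition Kst :: "nat \<Rightarrow> (('n::finite \<Rightarrow> nat) \<Rightarrow> 'd::real_vector) \<Rightarrow> 'n \<Rightarrow> ('n \<Rightarrow> nat) \<Rightarrow> 'd" where
  "Kst m f = (\<lambda>i \<beta>. (real (Suc (\<beta> i)) / real (m + mabs \<beta>)) *\<^sub>R f (sucx i \<beta>))"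

lemma kc_pos: assumes "m \<ge> 1" shows "real (Suc (\<beta> i)) / real (m + mabs \<beta>) > 0"
  using assms by simp

lemma kc_le1: assumes "m \<ge> 1" shows "real (Suc (\<beta> i)) / real (m + mabs \<beta>) \<le> 1"
  using coef_le1[OF assms, of \<beta> i] assms by simp

lemma rho_sucx': assumes "m \<ge> 1"
  shows "rho m (sucx i \<beta>) = rho m \<beta> / (real (Suc (\<beta> i)) / real (m + mabs \<beta>))"
  using rho_sucx[OF assms, of i \<beta>] by simp

lemma K_H:
  assumes m: "m \<ge> 1" and f: "f \<in> Hspace m"
  shows "Kst m f \<in> HspaceN m"
  unfolding HspaceN_def
proof (intro CollectI allI)
  fix i
  have fs: "(\<lambda>\<alpha>. (norm (f \<alpha>))\<^sup>2 / rho m \<alpha>) summable_on UNIV" using f unfolding Hspace_def by simp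
  let ?g = "\<lambda>\<alpha>. if \<alpha> i = 0 then 0 else (norm (f \<alpha>))\<^sup>2 / rho m \<alpha>"
  have gs: "?g summable_on UNIV"
    by (rule summable_on_comparison_test[OF fs]) auto
  have gs2: "(\<lambda>\<beta>. ?g (sucx i \<beta>)) summable_on UNIV"
    using reindex_summable[of i ?g] gs by simp
  have e: "?g (sucx i \<beta>) = (norm (f (sucx i \<beta>)))\<^sup>2 / rho m (sucx i \<beta>)" for \<beta>
    by (simp add: sucx_def)
  have pw: "(norm (Kst m f i \<beta>))\<^sup>2 / rho m \<beta> \<le> ?g (sucx i \<beta>)" for \<beta>
  proof -
    define c where "c = real (Suc (\<beta> i)) / real (m + mabs \<beta>)"
    have c0: "c > 0" "c \<le> 1" unfolding c_def using kc_pos[OF m] kc_le1[OF m] by auto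
    define a where "a = (norm (f (sucx i \<beta>)))\<^sup>2 / rho m \<beta>"
    have a0: "a \<ge> 0" unfolding a_def by simp
    have "(norm (Kst m f i \<beta>))\<^sup>2 / rho m \<beta> = c * (c * a)"
      unfolding Kst_def c_def[symmetric] a_def using c0 by (simp add: power2_eq_square)
    also have "\<dots> \<le> c * a" using c0 a0 by (intro mult_left_mono) (auto simp: mult_left_le_one_le)
    also have "\<dots> = ?g (sucx i \<beta>)" unfolding e rho_sucx'[OF m] c_def[symmetric] a_def
      using c0 rho_pos[of m \<beta>] by (simp add: field_simps sucx_def)
    finally show ?thesis .
  qed
  show "Kst m f i \<in> Hspace m" unfolding Hspace_def
    by (rule CollectI, rule summable_on_comparison_test[OF gs2]) (use pw in auto)
qed

lemma adj:
  assumes m: "m \<ge> 1" and J: "complex_structure J" and H: "H \<in> HspaceN m" and f: "f \<in> Hspace m"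
  shows "hinner m J (Mz_row H) f = hinnerN m J H (Kst m f)"
proof -
  have Hi: "H i \<in> Hspace m" for i using H unfolding HspaceN_def by auto
  let ?t = "\<lambda>i \<alpha>. cinner J (Mzi i (H i) \<alpha>) (f \<alpha>) / complex_of_real (rho m \<alpha>)"
  have ts: "?t i summable_on UNIV" for i by (rule cinner_summable[OF J Mzi_H(1)[OF m Hi] f])
  have "hinner m J (Mz_row H) f = infsum (\<lambda>\<alpha>. \<Sum>i\<in>UNIV. ?t i \<alpha>) UNIV"
    unfolding hinner_def Mz_row_def cinner_sum_left by (simp add: sum_divide_distrib)
  also have "\<dots> = (\<Sum>i\<in>UNIV. infsum (?t i) UNIV)" by (rule infsum_finsum) (use ts in auto)
  also have "\<dots> = (\<Sum>i\<in>UNIV. hinner m J (H i) (Kst m f i))"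
  proof (rule sum.cong[OF refl])
    fix i
    have "infsum (?t i) UNIV = infsum (\<lambda>\<beta>. ?t i (sucx i \<beta>)) UNIV"
      by (rule reindex_infsum) (simp add: Mzi_zero)
    also have "\<dots> = hinner m J (H i) (Kst m f i)" unfolding hinner_def
    proof (rule infsum_cong)
      fix \<beta>
      define c where "c = real (Suc (\<beta> i)) / real (m + mabs \<beta>)"
      have c0: "c > 0" unfolding c_def using kc_pos[OF m] by auto
      have r0: "rho m \<beta> > 0" by (rule rho_pos)
      show "?t i (sucx i \<beta>) = cinner J (H i \<beta>) (Kst m f i \<beta>) / complex_of_real (rho m \<beta>)"
        unfolding Mzi_sucx Kst_def c_def[symmetric] cinner_scale_right[OF J] rho_sucx'[OF m]
        using c0 r0 by (simp add: field_simps)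
    qed
    finally show "infsum (?t i) UNIV = hinner m J (H i) (Kst m f i)" .
  qed
  also have "\<dots> = hinnerN m J H (Kst m f)" unfolding hinnerN_def ..
  finally show ?thesis .
qed

lemma point_H: "(\<lambda>j \<gamma>. if j = i \<and> \<gamma> = \<beta> then x else 0) \<in> HspaceN m"
  unfolding HspaceN_def Hspace_def
proof (intro CollectI allI)
  fix j
  show "(\<lambda>\<alpha>. (norm (if j = i \<and> \<alpha> = \<beta> then x else 0))\<^sup>2 / rho m \<alpha>) summable_on UNIV"
    by (subst summable_on_cong_neutral[where T="{\<beta>}" and g="\<lambda>\<alpha>. (norm (if j = i \<and> \<alpha> = \<beta> then x else 0))\<^sup>2 / rho m \<alpha>"]) auto
qed

lemma point_hinnerN:
  "hinnerN m J (\<lambda>j \<gamma>. if j = i \<and> \<gamma> = \<beta> then x else 0) G = cinner J x (G i \<beta>) / complex_of_real (rho m \<beta>)"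
proof -
  have "hinner m J (\<lambda>\<gamma>. if j = i \<and> \<gamma> = \<beta> then x else 0) (G j) =
     (if j = i then cinner J x (G i \<beta>) / complex_of_real (rho m \<beta>) else 0)" for j
  proof -
    have "hinner m J (\<lambda>\<gamma>. if j = i \<and> \<gamma> = \<beta> then x else 0) (G j) =
       infsum (\<lambda>\<gamma>. cinner J (if j = i \<and> \<gamma> = \<beta> then x else 0) (G j \<gamma>) / complex_of_real (rho m \<gamma>)) {\<beta>}"
      unfolding hinner_def by (rule infsum_cong_neutral) auto
    thus ?thesis by auto
  qed
  thus ?thesis unfolding hinnerN_def by simp
qed

lemma Mz_star_eq:
  assumes m: "m \<ge> 1" and J: "complex_structure J" and f: "f \<in> Hspace m"
  shows "Mz_star m J f = Kst m f"
  unfolding Mz_star_def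
proof (rule the_equality)
  show "Kst m f \<in> HspaceN m \<and> (\<forall>H\<in>HspaceN m. hinner m J (Mz_row H) f = hinnerN m J H (Kst m f))"
    using K_H[OF m f] adj[OF m J _ f] by auto
  fix G assume G: "G \<in> HspaceN m \<and> (\<forall>H\<in>HspaceN m. hinner m J (Mz_row H) f = hinnerN m J H G)"
  show "G = Kst m f"
  proof (intro ext)
    fix i \<beta>
    define x where "x = G i \<beta> - Kst m f i \<beta>"
    have "hinnerN m J (\<lambda>j \<gamma>. if j = i \<and> \<gamma> = \<beta> then x else 0) G
        = hinnerN m J (\<lambda>j \<gamma>. if j = i \<and> \<gamma> = \<beta> then x else 0) (Kst m f)"
      using G adj[OF m J point_H f] point_H by metis
    hence "cinner J x (G i \<beta>) = cinner J x (Kst m f i \<beta>)"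
      unfolding point_hinnerN using rho_pos[of m \<beta>] by simp
    hence "x \<bullet> G i \<beta> = x \<bullet> Kst m f i \<beta>" unfolding cinner_def by simp
    hence "x \<bullet> x = 0" unfolding x_def by (simp add: inner_diff_right)
    thus "G i \<beta> = Kst m f i \<beta>" unfolding x_def by simp
  qed
qed


lemma Mzi_K: assumes m: "m \<ge> 1"
  shows "Mzi i (Kst m g i) \<alpha> = (real (\<alpha> i) / real (m + mabs \<alpha> - 1)) *\<^sub>R g \<alpha>"
proof (cases "\<alpha> i = 0")
  case True thus ?thesis by (simp add: Mzi_zero)
next
  case False
  define \<beta> where "\<beta> = \<alpha>(i := \<alpha> i - 1)"
  have sb: "sucx i \<beta> = \<alpha>" unfolding \<beta>_def using sucx_pred[of \<alpha> i, OF False] .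
  have "Mzi i (Kst m g i) \<alpha> = Kst m g i \<beta>" unfolding Mzi_def \<beta>_def using False by simp
  also have "\<dots> = (real (\<alpha> i) / real (m + mabs \<alpha> - 1)) *\<^sub>R g \<alpha>"
    unfolding Kst_def sb using mabs_sucx[of i \<beta>] sb False unfolding \<beta>_def by auto
  finally show ?thesis .
qed

lemma Mz_row_K: assumes m: "m \<ge> 1"
  shows "Mz_row (Kst m g) \<alpha> = (real (mabs \<alpha>) / real (m + mabs \<alpha> - 1)) *\<^sub>R g \<alpha>"
  unfolding Mz_row_def Mzi_K[OF m] scaleR_sum_left[symmetric] sum_divide_distrib[symmetric]
  by (simp add: mabs_def)

definition cutz :: "(('n::finite \<Rightarrow> nat) \<Rightarrow> 'd::real_vector) \<Rightarrow> ('n \<Rightarrow> nat) \<Rightarrow> 'd" where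
  "cutz f = (\<lambda>\<alpha>. if mabs \<alpha> = 0 then 0 else f \<alpha>)"

lemma P_delta: assumes m: "m \<ge> 1" shows "Mz_row (Kst m (delta m f)) = cutz f"
proof
  fix \<alpha>
  show "Mz_row (Kst m (delta m f)) \<alpha> = cutz f \<alpha>"
  proof (cases "mabs \<alpha> = 0")
    case True thus ?thesis unfolding Mz_row_K[OF m] cutz_def by simp
  next
    case False
    have "real (m + mabs \<alpha> - 1) > 0" using m False by simp
    thus ?thesis unfolding Mz_row_K[OF m] cutz_def delta_def using False by simp
  qed
qed

lemma delta_P: assumes m: "m \<ge> 1" shows "delta m (Mz_row (Kst m f)) = cutz f"
proof
  fix \<alpha>
  show "delta m (Mz_row (Kst m f)) \<alpha> = cutz f \<alpha>"
  proof (cases "mabs \<alpha> = 0")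
    case True thus ?thesis unfolding Mz_row_K[OF m] cutz_def delta_def by simp
  next
    case False
    have "real (m + mabs \<alpha> - 1) > 0" using m False by simp
    thus ?thesis unfolding Mz_row_K[OF m] cutz_def delta_def using False by simp
  qed
qed

lemma K_cutz: "Kst m (cutz f) = Kst m f"
  unfolding Kst_def cutz_def by (simp add: mabs_sucx)

lemma part1:
  fixes f :: "('n::finite \<Rightarrow> nat) \<Rightarrow> 'd::real_inner"
  assumes m: "m \<ge> 1" and J: "complex_structure J" and f: "f \<in> Hspace m"
  shows "MzMz_inv m J (Mz_star m J f) = Kst m (delta m f)"
proof -
  have df: "delta m f \<in> Hspace m" by (rule delta_H(1)[OF m f])
  show ?thesis unfolding MzMz_inv_def Mz_star_eq[OF m J f]
  proof (rule the_equality)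
    have cH: "cutz f \<in> Hspace m" using Mz_row_H(1)[OF m K_H[OF m df]] unfolding P_delta[OF m] .
    have im: "Kst m (delta m f) \<in> Mz_star m J ` Hspace m"
      using image_eqI[where f="Mz_star m J", OF Mz_star_eq[OF m J df, symmetric] df] .
    show "Kst m (delta m f) \<in> Mz_star m J ` Hspace m \<and> Mz_star m J (Mz_row (Kst m (delta m f))) = Kst m f"
      using im Mz_star_eq[OF m J cH] by (auto simp: P_delta[OF m] K_cutz)
    fix X assume X: "X \<in> Mz_star m J ` Hspace m \<and> Mz_star m J (Mz_row X) = Kst m f"
    then obtain g where g: "g \<in> Hspace m" "X = Kst m g" using Mz_star_eq[OF m J] by auto
    have PH: "Mz_row (Kst m g) \<in> Hspace m" by (rule Mz_row_H(1)[OF m K_H[OF m g(1)]])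
    have eq: "Kst m (Mz_row (Kst m g)) = Kst m f" using X g Mz_star_eq[OF m J PH] by simp
    show "X = Kst m (delta m f)" unfolding g(2)
    proof (intro ext)
      fix i :: 'n and \<beta> :: "'n \<Rightarrow> nat"
      define c where "c = real (Suc (\<beta> i)) / real (m + mabs \<beta>)"
      have c0: "c \<noteq> 0" unfolding c_def using kc_pos[OF m, of \<beta> i] by auto
      define k where "k = mabs (sucx i \<beta>)"
      have k: "k = Suc (mabs \<beta>)" unfolding k_def by (rule mabs_sucx)
      have D: "real (m + k - 1) > 0" using m k by simp
      have "c *\<^sub>R Mz_row (Kst m g) (sucx i \<beta>) = c *\<^sub>R f (sucx i \<beta>)"
        using fun_cong[OF fun_cong[OF eq, of i], of \<beta>] unfolding Kst_def c_def .
      hence "Mz_row (Kst m g) (sucx i \<beta>) = f (sucx i \<beta>)" using c0 by simp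
      hence e: "(real k / real (m + k - 1)) *\<^sub>R g (sucx i \<beta>) = f (sucx i \<beta>)"
        unfolding Mz_row_K[OF m] k_def .
      have "delta m f (sucx i \<beta>) = (real (m + k - 1) / real k) *\<^sub>R f (sucx i \<beta>)"
        unfolding delta_def k_def[symmetric] using k by simp
      also have "\<dots> = g (sucx i \<beta>)" unfolding e[symmetric] using D k by simp
      finally show "Kst m g i \<beta> = Kst m (delta m f) i \<beta>" unfolding Kst_def by simp
    qed
  qed
qed

lemma cscale_zero[simp]: assumes "complex_structure J" shows "cscale J a 0 = 0"
  unfolding cscale_def using linear_0[OF cs_linear[OF assms]] by simp

lemma cscale_add: assumes "complex_structure J" shows "cscale J a (x + y) = cscale J a x + cscale J a y"
  unfolding cscale_def using linear_add[OF cs_linear[OF assms]] by (simp add: algebra_simps)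

lemma cscale_sum: assumes "complex_structure J" shows "cscale J a (\<Sum>i\<in>I. x i) = (\<Sum>i\<in>I. cscale J a (x i))"
  unfolding cscale_def
  by (simp add: linear_sum[OF cs_linear[OF assms]] scaleR_sum_right sum.distrib)

lemma cscale_scaleR: assumes "complex_structure J" shows "r *\<^sub>R cscale J a x = cscale J a (r *\<^sub>R x)"
  unfolding cscale_def using linear_scale[OF cs_linear[OF assms]] by (simp add: algebra_simps)

lemma part3:
  assumes J: "complex_structure J"
  shows "delta m (Mz_row (\<lambda>i \<alpha>. cscale J a (F i \<alpha>) + cscale J b (G i \<alpha>)))
        = (\<lambda>\<alpha>. cscale J a (delta m (Mz_row F) \<alpha>) + cscale J b (delta m (Mz_row G) \<alpha>))"
proof -
  have row: "Mz_row (\<lambda>i \<alpha>. cscale J a (F i \<alpha>) + cscale J b (G i \<alpha>)) \<alpha> =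
     cscale J a (Mz_row F \<alpha>) + cscale J b (Mz_row G \<alpha>)" for \<alpha>
  proof -
    have "Mzi i (\<lambda>\<alpha>. cscale J a (F i \<alpha>) + cscale J b (G i \<alpha>)) \<alpha> =
        cscale J a (Mzi i (F i) \<alpha>) + cscale J b (Mzi i (G i) \<alpha>)" for i
      unfolding Mzi_def using J by simp
    thus ?thesis unfolding Mz_row_def using J by (simp add: cscale_sum sum.distrib)
  qed
  show ?thesis
    by (rule ext) (simp add: delta_def row scaleR_add_right cscale_scaleR[OF J])
qed


theorem lemma1:
  fixes m :: nat and J :: "'d::{real_inner, complete_space} \<Rightarrow> 'd"
    and HN :: "('n::finite \<Rightarrow> ('n \<Rightarrow> nat) \<Rightarrow> 'd) set"
  defines "HN \<equiv> HspaceN m"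
  assumes m: "m \<ge> 1"
    and J: "complex_structure J"
  shows "(\<forall>f::('n \<Rightarrow> nat) \<Rightarrow> 'd. f \<in> Hspace m \<longrightarrow>
            MzMz_inv m J (Mz_star m J f) = Mz_star m J (delta m f))
    \<and> (\<forall>F\<in>HN. delta m (Mz_row F) \<in> Hspace m)
    \<and> (\<forall>F\<in>HN. \<forall>G\<in>HN. \<forall>a b.
          delta m (Mz_row (\<lambda>i \<alpha>. cscale J a (F i \<alpha>) + cscale J b (G i \<alpha>)))
        = (\<lambda>\<alpha>. cscale J a (delta m (Mz_row F) \<alpha>) + cscale J b (delta m (Mz_row G) \<alpha>)))
    \<and> (\<exists>C. \<forall>F\<in>HN. hnorm m (delta m (Mz_row F)) \<le> C * hnormN m F)
    \<and> (\<forall>G\<in>Mz_star m J ` (Hspace m :: (('n \<Rightarrow> nat) \<Rightarrow> 'd) set).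
          delta m (Mz_row G) = Mz_row (MzMz_inv m J G))"
proof (intro conjI)
  show "\<forall>f::('n \<Rightarrow> nat) \<Rightarrow> 'd. f \<in> Hspace m \<longrightarrow>
            MzMz_inv m J (Mz_star m J f) = Mz_star m J (delta m f)"
    using part1[OF m J] Mz_star_eq[OF m J delta_H(1)[OF m]] by metis
  show "\<forall>F\<in>HN. delta m (Mz_row F) \<in> Hspace m"
    unfolding HN_def using delta_H(1)[OF m Mz_row_H(1)[OF m]] by blast
  show "\<forall>F\<in>HN. \<forall>G\<in>HN. \<forall>a b.
          delta m (Mz_row (\<lambda>i \<alpha>. cscale J a (F i \<alpha>) + cscale J b (G i \<alpha>)))
        = (\<lambda>\<alpha>. cscale J a (delta m (Mz_row F) \<alpha>) + cscale J b (delta m (Mz_row G) \<alpha>))"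
    using part3[OF J] by blast
  show "\<exists>C. \<forall>F\<in>HN. hnorm m (delta m (Mz_row F)) \<le> C * hnormN m F"
  proof (intro exI ballI)
    fix F assume F: "F \<in> HN"
    hence F': "F \<in> HspaceN m" unfolding HN_def .
    have R: "Mz_row F \<in> Hspace m" by (rule Mz_row_H(1)[OF m F'])
    have "NN m (delta m (Mz_row F)) \<le> (real m)\<^sup>2 * NN m (Mz_row F)" by (rule delta_H(2)[OF m R])
    also have "\<dots> \<le> (real m)\<^sup>2 * (real CARD('n) * (\<Sum>i\<in>UNIV. NN m (F i)))"
      by (intro mult_left_mono Mz_row_H(2)[OF m F']) auto
    finally have le: "NN m (delta m (Mz_row F)) \<le> (real m * sqrt (real CARD('n)))\<^sup>2 * (\<Sum>i\<in>UNIV. NN m (F i))"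
      by (simp add: power_mult_distrib)
    have hN: "hnormN m F = sqrt (\<Sum>i\<in>UNIV. NN m (F i))"
      unfolding hnormN_def hnorm_NN by (simp add: NN_nonneg)
    have "hnorm m (delta m (Mz_row F)) \<le> sqrt ((real m * sqrt (real CARD('n)))\<^sup>2 * (\<Sum>i\<in>UNIV. NN m (F i)))"
      unfolding hnorm_NN by (rule real_sqrt_le_mono[OF le])
    also have "\<dots> = (real m * sqrt (real CARD('n))) * hnormN m F"
      unfolding hN real_sqrt_mult by simp
    finally show "hnorm m (delta m (Mz_row F)) \<le> (real m * sqrt (real CARD('n))) * hnormN m F" .
  qed
  show "\<forall>G\<in>Mz_star m J ` (Hspace m :: (('n \<Rightarrow> nat) \<Rightarrow> 'd) set).
          delta m (Mz_row G) = Mz_row (MzMz_inv m J G)"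
  proof
    fix G assume "G \<in> Mz_star m J ` (Hspace m :: (('n \<Rightarrow> nat) \<Rightarrow> 'd) set)"
    then obtain f :: "('n \<Rightarrow> nat) \<Rightarrow> 'd" where f: "f \<in> Hspace m" "G = Mz_star m J f" by auto
    show "delta m (Mz_row G) = Mz_row (MzMz_inv m J G)"
      using part1[OF m J f(1)] Mz_star_eq[OF m J f(1)] unfolding f(2) by (simp add: delta_P[OF m] P_delta[OF m])
  qed
qed

end
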